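(* Let $G_0$ be the group of homeomorphisms of $\mathbb{R}$ defined in the context. Then $G_0'=G_0''$.
   Context: $G_0$ is the group of homeomorphisms of $\mathbb{R}$ generated by the following maps: - $a(t)=t+1$; - $b$, where $b(t)=t$ for $t\le 0$, $b(t)=t/(1-t)$ for $0\le t\le 1/2$, $b(t)=(3t-1)/t$ for $1/2\le t\le 1$, and $b(t)=t+1$ for $t\ge 1$; - $c$, where $c(t)=2t/(t+1)$ for $0\le t\le 1$ and $c(t)=t$ otherwise. $G_0'$ is the commutator subgroup and $G_0''=(G_0')'$. *)

theory Defs
  imports "HOL-Analysis.Analysis" "HOL-Algebra.Algebra"
begin

definition gen_a :: "real \<Rightarrow> real" where
  "gen_a t = t + 1"

definition gen_b :: "real \<Rightarrow> real" where
  "gen_b t = (if t \<le> 0 then t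
              else if t \<le> 1/2 then t / (1 - t)
              else if t \<le> 1 then (3*t - 1) / t
              else t + 1)"

definition gen_c :: "real \<Rightarrow> real" where
  "gen_c t = (if 0 \<le> t \<and> t \<le> 1 then 2*t / (t + 1) else t)"

text \<open>The ambient group: all bijections of the real line under composition
  (the group of homeomorphisms of R is a subgroup, and the subgroup generated by
  a, b, c is the same in either ambient group).\<close>
abbreviation PermR :: "(real \<Rightarrow> real) monoid" where
  "PermR \<equiv> BijGroup (UNIV :: real set)"

definition G0 :: "(real \<Rightarrow> real) set" where
  "G0 = generate PermR {gen_a, gen_b, gen_c}"

end

theory Submission imports Defs begin


lemma carrier_PermR: "carrier PermR = {f. bij f}"
  by (auto simp: BijGroup_def Bij_def extensional_def)

lemma mult_PermR: "x \<in> carrier PermR \<Longrightarrow> y \<in> carrier PermR \<Longrightarrow> x \<otimes>\<^bsub>PermR\<^esub> y = x \<circ> y"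
  by (auto simp: BijGroup_def compose_def Bij_def extensional_def)

lemma inv_PermR: "x \<in> carrier PermR \<Longrightarrow> inv\<^bsub>PermR\<^esub> x = inv_into UNIV x"
proof -
  assume "x \<in> carrier PermR"
  then have "x \<in> Bij UNIV" by (simp add: BijGroup_def)
  from inv_BijGroup[OF this] show ?thesis by (simp add: restrict_def)
qed

lemma one_PermR: "\<one>\<^bsub>PermR\<^esub> = id"
  by (auto simp: BijGroup_def)

interpretation P: group PermR by (rule group_BijGroup)

definition binv :: "real \<Rightarrow> real" where
  "binv s = (if s \<le> 0 then s else if s \<le> 1 then s/(1+s) else if s \<le> 2 then 1/(3-s) else s-1)"

lemma b_binv: "gen_b (binv s) = s"
proof -
  consider "s \<le> 0" | "0 < s" "s \<le> 1" | "1 < s" "s \<le> 2" | "2 < s" by linarith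
  then show ?thesis
  proof cases
    case 2
    have "s/(1+s) \<le> 1/2" using 2 by (simp add: field_simps)
    moreover have "s/(1+s) > 0" using 2 by simp
    ultimately show ?thesis using 2 by (simp add: binv_def gen_b_def field_simps)
  next
    case 3
    have "1/(3-s) > 1/2" using 3 by (simp add: field_simps)
    moreover have "1/(3-s) \<le> 1" using 3 by (simp add: field_simps)
    ultimately show ?thesis using 3 by (simp add: binv_def gen_b_def field_simps)
  qed (auto simp: binv_def gen_b_def)
qed

lemma binv_b: "binv (gen_b t) = t"
proof -
  consider "t \<le> 0" | "0 < t" "t \<le> 1/2" | "1/2 < t" "t \<le> 1" | "1 < t" by linarith
  then show ?thesis
  proof cases
    case 2
    have "t/(1-t) \<le> 1" using 2 by (simp add: field_simps)
    moreover have "t/(1-t) > 0" using 2 by simp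
    ultimately show ?thesis using 2 by (simp add: binv_def gen_b_def field_simps)
  next
    case 3
    have "(3*t-1)/t > 1" using 3 by (simp add: field_simps)
    moreover have "(3*t-1)/t \<le> 2" using 3 by (simp add: field_simps)
    ultimately show ?thesis using 3 by (simp add: binv_def gen_b_def field_simps)
  qed (auto simp: binv_def gen_b_def)
qed

lemma bij_b: "bij gen_b"
  by (rule o_bij[of binv]) (auto simp: b_binv binv_b)

definition cinv :: "real \<Rightarrow> real" where
  "cinv s = (if 0 \<le> s \<and> s \<le> 1 then s/(2-s) else s)"

lemma bij_c: "bij gen_c"
proof (rule o_bij[of cinv])
  show "cinv \<circ> gen_c = id"
  proof
    fix t
    show "(cinv \<circ> gen_c) t = id t"
    proof (cases "0 \<le> t \<and> t \<le> 1")
      case True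
      have "2*t/(t+1) \<le> 1" using True by (simp add: field_simps)
      then show ?thesis using True by (simp add: cinv_def gen_c_def field_simps)
    qed (auto simp: cinv_def gen_c_def)
  qed
  show "gen_c \<circ> cinv = id"
  proof
    fix t
    show "(gen_c \<circ> cinv) t = id t"
    proof (cases "0 \<le> t \<and> t \<le> 1")
      case True
      have "t/(2-t) \<le> 1" using True by (simp add: field_simps)
      then show ?thesis using True by (simp add: cinv_def gen_c_def field_simps)
    qed (auto simp: cinv_def gen_c_def)
  qed
qed

lemma bij_a: "bij gen_a"
  by (rule o_bij[of "\<lambda>t. t - 1"]) (auto simp: gen_a_def)



definition cmt :: "('a,'b) monoid_scheme \<Rightarrow> 'a \<Rightarrow> 'a \<Rightarrow> 'a" where
  "cmt G x y = x \<otimes>\<^bsub>G\<^esub> y \<otimes>\<^bsub>G\<^esub> inv\<^bsub>G\<^esub> x \<otimes>\<^bsub>G\<^esub> inv\<^bsub>G\<^esub> y"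

context group begin

lemma cancel_l: "x \<in> carrier G \<Longrightarrow> y \<in> carrier G \<Longrightarrow> x \<otimes> (inv x \<otimes> y) = y"
  by (simp add: m_assoc[symmetric])
lemma cancel_r: "x \<in> carrier G \<Longrightarrow> y \<in> carrier G \<Longrightarrow> inv x \<otimes> (x \<otimes> y) = y"
  by (simp add: m_assoc[symmetric])

lemmas gs = m_assoc inv_mult_group inv_inv r_inv l_inv r_one l_one cancel_l cancel_r m_closed inv_closed

lemma comm_assoc: "v \<in> carrier G \<Longrightarrow> y \<in> carrier G \<Longrightarrow> R \<in> carrier G \<Longrightarrow> v \<otimes> y = y \<otimes> v \<Longrightarrow> v \<otimes> (y \<otimes> R) = y \<otimes> (v \<otimes> R)"
  by (metis m_assoc)

lemma comm_inv: "v \<in> carrier G \<Longrightarrow> y \<in> carrier G \<Longrightarrow> v \<otimes> y = y \<otimes> v \<Longrightarrow> inv v \<otimes> y = y \<otimes> inv v"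
  proof -
  assume a: "v \<in> carrier G" "y \<in> carrier G" and c: "v \<otimes> y = y \<otimes> v"
  have "inv v \<otimes> y = inv v \<otimes> (y \<otimes> v) \<otimes> inv v" using a by (simp add: gs)
  also have "\<dots> = inv v \<otimes> (v \<otimes> y) \<otimes> inv v" using c by simp
  also have "\<dots> = y \<otimes> inv v" using a by (simp add: gs)
  finally show ?thesis .
qed

lemma cmt_closed: "x \<in> carrier G \<Longrightarrow> y \<in> carrier G \<Longrightarrow> cmt G x y \<in> carrier G"
  by (simp add: cmt_def)

lemma L1: assumes "x \<in> carrier G" "y \<in> carrier G" "v \<in> carrier G" "v \<otimes> y = y \<otimes> v"
  shows "cmt G (x \<otimes> v) y = cmt G x y"
proof -
  have "cmt G (x \<otimes> v) y = x \<otimes> (v \<otimes> (y \<otimes> (inv v \<otimes> (inv x \<otimes> inv y))))"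
    using assms(1-3) by (simp add: cmt_def gs)
  also have "\<dots> = x \<otimes> (y \<otimes> (v \<otimes> (inv v \<otimes> (inv x \<otimes> inv y))))"
    using comm_assoc[OF assms(3,2) _ assms(4), of "inv v \<otimes> (inv x \<otimes> inv y)"] assms(1-3) by simp
  also have "\<dots> = cmt G x y" using assms(1-3) by (simp add: cmt_def gs)
  finally show ?thesis .
qed

lemma L3: assumes "x \<in> carrier G" "y \<in> carrier G" "w \<in> carrier G" "w \<otimes> x = x \<otimes> w"
  shows "cmt G x (y \<otimes> w) = cmt G x y"
proof -
  have "cmt G x (y \<otimes> w) = x \<otimes> (y \<otimes> (w \<otimes> (inv x \<otimes> (inv w \<otimes> inv y))))"
    using assms by (simp add: cmt_def gs)
  also have "\<dots> = x \<otimes> (y \<otimes> (inv x \<otimes> (w \<otimes> (inv w \<otimes> inv y))))"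
  proof -
    have "inv x \<otimes> w = w \<otimes> inv x" using comm_inv[of x w] assms(1-3) assms(4)[symmetric] by simp
    then have "w \<otimes> (inv x \<otimes> (inv w \<otimes> inv y)) = inv x \<otimes> (w \<otimes> (inv w \<otimes> inv y))"
      using comm_assoc[of w "inv x" "inv w \<otimes> inv y"] assms(1-3) by simp
    then show ?thesis by simp
  qed
  also have "\<dots> = cmt G x y" using assms(1-3) by (simp add: cmt_def gs)
  finally show ?thesis .
qed

lemma L2: assumes "x \<in> carrier G" "y \<in> carrier G"
  shows "cmt G (x \<otimes> inv y) y = cmt G x y"
  using L1[of x y "inv y"] assms by (simp add: gs)

lemma L4: assumes "g \<in> carrier G" "h \<in> carrier G" "f \<in> carrier G" "k \<in> carrier G"
  and c1: "(f \<otimes> g \<otimes> inv f) \<otimes> h = h \<otimes> (f \<otimes> g \<otimes> inv f)"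
  and c2: "(k \<otimes> h \<otimes> inv k) \<otimes> cmt G g f = cmt G g f \<otimes> (k \<otimes> h \<otimes> inv k)"
  shows "cmt G g h = cmt G (cmt G g f) (cmt G h k)"
proof -
  have e1: "cmt G g f = g \<otimes> inv (f \<otimes> g \<otimes> inv f)" using assms by (simp add: cmt_def gs)
  have e2: "cmt G h k = h \<otimes> inv (k \<otimes> h \<otimes> inv k)" using assms by (simp add: cmt_def gs)
  have cl: "f \<otimes> g \<otimes> inv f \<in> carrier G" "k \<otimes> h \<otimes> inv k \<in> carrier G" "cmt G g f \<in> carrier G"
    using assms by (auto simp: cmt_closed)
  have "cmt G (cmt G g f) (cmt G h k) = cmt G (cmt G g f) (h \<otimes> inv (k \<otimes> h \<otimes> inv k))"
    by (simp only: e2)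
  also have "\<dots> = cmt G (cmt G g f) h"
    by (rule L3) (rule cl, rule assms, rule inv_closed, rule cl, rule comm_inv[OF cl(2) cl(3) c2])
  also have "\<dots> = cmt G (g \<otimes> inv (f \<otimes> g \<otimes> inv f)) h" by (simp only: e1)
  also have "\<dots> = cmt G g h"
    by (rule L1) (rule assms, rule assms, rule inv_closed, rule cl, rule comm_inv[OF cl(1) assms(2) c1])
  finally show ?thesis by simp
qed

lemma cmt_swap: "x \<in> carrier G \<Longrightarrow> y \<in> carrier G \<Longrightarrow> cmt G y x = inv (cmt G x y)"
  by (simp add: cmt_def gs)

lemma cmt_inv1: "x \<in> carrier G \<Longrightarrow> y \<in> carrier G \<Longrightarrow> cmt G (inv x) y = inv x \<otimes> inv (cmt G x y) \<otimes> inv (inv x)"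
  by (simp add: cmt_def gs)

lemma cmt_mult1: "x \<in> carrier G \<Longrightarrow> y \<in> carrier G \<Longrightarrow> t \<in> carrier G \<Longrightarrow> cmt G (x \<otimes> y) t = (x \<otimes> cmt G y t \<otimes> inv x) \<otimes> cmt G x t"
  by (simp add: cmt_def gs)

lemma cmt_inv2: "x \<in> carrier G \<Longrightarrow> t \<in> carrier G \<Longrightarrow> cmt G x (inv t) = inv t \<otimes> inv (cmt G x t) \<otimes> inv (inv t)"
  by (simp add: cmt_def gs)

lemma cmt_mult2: "x \<in> carrier G \<Longrightarrow> y \<in> carrier G \<Longrightarrow> z \<in> carrier G \<Longrightarrow> cmt G x (y \<otimes> z) = cmt G x y \<otimes> (y \<otimes> cmt G x z \<otimes> inv y)"
  by (simp add: cmt_def gs)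

lemma cmt_one: "t \<in> carrier G \<Longrightarrow> cmt G \<one> t = \<one>" "t \<in> carrier G \<Longrightarrow> cmt G t \<one> = \<one>"
  by (simp_all add: cmt_def)

end

context group begin

lemma conj_derived:
  assumes H: "H \<subseteq> carrier G" and x: "x \<in> carrier G" and cl: "\<And>h. h \<in> H \<Longrightarrow> x \<otimes> h \<otimes> inv x \<in> H"
    and y: "y \<in> derived G H"
  shows "x \<otimes> y \<otimes> inv x \<in> derived G H"
  using y unfolding derived_def
proof (induction y rule: generate.induct)
  case one
  then show ?case using x by (simp add: generate.one)
next
  case (incl h)
  then obtain h1 h2 where h: "h1 \<in> H" "h2 \<in> H" "h = h1 \<otimes> h2 \<otimes> inv h1 \<otimes> inv h2" by blast
  have c: "h1 \<in> carrier G" "h2 \<in> carrier G" using h H by auto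
  have "x \<otimes> h \<otimes> inv x = (x \<otimes> h1 \<otimes> inv x) \<otimes> (x \<otimes> h2 \<otimes> inv x) \<otimes> inv (x \<otimes> h1 \<otimes> inv x) \<otimes> inv (x \<otimes> h2 \<otimes> inv x)"
    using h(3) c x by (simp add: gs)
  moreover have "x \<otimes> h1 \<otimes> inv x \<in> H" "x \<otimes> h2 \<otimes> inv x \<in> H" using cl h by auto
  ultimately show ?case by (auto intro!: generate.incl)
next
  case (inv h)
  then obtain h1 h2 where h: "h1 \<in> H" "h2 \<in> H" "h = h1 \<otimes> h2 \<otimes> inv h1 \<otimes> inv h2" by blast
  have c: "h1 \<in> carrier G" "h2 \<in> carrier G" using h H by auto
  have "x \<otimes> inv h \<otimes> inv x = inv ((x \<otimes> h1 \<otimes> inv x) \<otimes> (x \<otimes> h2 \<otimes> inv x) \<otimes> inv (x \<otimes> h1 \<otimes> inv x) \<otimes> inv (x \<otimes> h2 \<otimes> inv x))"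
    using h(3) c x by (simp add: gs)
  moreover have "x \<otimes> h1 \<otimes> inv x \<in> H" "x \<otimes> h2 \<otimes> inv x \<in> H" using cl h by auto
  ultimately show ?case by (auto intro!: generate.inv)
next
  case (eng h1 h2)
  have c: "h1 \<in> carrier G" "h2 \<in> carrier G"
    using eng.hyps generate_in_carrier[OF derived_set_in_carrier[OF H]] by auto
  have "x \<otimes> (h1 \<otimes> h2) \<otimes> inv x = (x \<otimes> h1 \<otimes> inv x) \<otimes> (x \<otimes> h2 \<otimes> inv x)"
    using c x by (simp add: gs)
  then show ?case using eng.IH by (auto intro!: generate.eng)
qed

lemma gen_cmt:
  assumes S: "S \<subseteq> carrier G" and N: "subgroup N G"
    and nc: "\<And>x n. x \<in> generate G S \<Longrightarrow> n \<in> N \<Longrightarrow> x \<otimes> n \<otimes> inv x \<in> N"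
    and st: "\<And>s t. s \<in> S \<Longrightarrow> t \<in> S \<Longrightarrow> cmt G s t \<in> N"
    and x: "x \<in> generate G S" and y: "y \<in> generate G S"
  shows "cmt G x y \<in> N"
proof -
  have gc: "z \<in> generate G S \<Longrightarrow> z \<in> carrier G" for z using generate_in_carrier[OF S] by auto
  have Sg: "s \<in> S \<Longrightarrow> s \<in> generate G S" for s by (rule generate.incl)
  have Sgi: "s \<in> S \<Longrightarrow> inv s \<in> generate G S" for s by (rule generate.inv)
  have step1: "cmt G x t \<in> N" if t: "t \<in> S" and x: "x \<in> generate G S" for x t
    using x
  proof (induction x rule: generate.induct)
    case one
    then show ?case using t S by (auto simp: cmt_one subgroup.one_closed[OF N])
  next
    case (incl h) then show ?case using st t by auto
  next
    case (inv h)
    have "cmt G (inv h) t = inv h \<otimes> inv (cmt G h t) \<otimes> inv (inv h)"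
      using inv t S by (intro cmt_inv1) auto
    moreover have "inv (cmt G h t) \<in> N" using st[OF inv t] subgroup.m_inv_closed[OF N] by auto
    ultimately show ?case using nc[OF Sgi[OF inv]] by auto
  next
    case (eng h1 h2)
    have "cmt G (h1 \<otimes> h2) t = (h1 \<otimes> cmt G h2 t \<otimes> inv h1) \<otimes> cmt G h1 t"
      using eng.hyps t S gc by (intro cmt_mult1) auto
    then show ?case using nc[OF eng.hyps(1) eng.IH(2)] eng.IH(1) subgroup.m_closed[OF N] by auto
  qed
  show ?thesis using y
  proof (induction y rule: generate.induct)
    case one
    then show ?case using x gc by (auto simp: cmt_one subgroup.one_closed[OF N])
  next
    case (incl h) then show ?case using step1 x by auto
  next
    case (inv h)
    have "cmt G x (inv h) = inv h \<otimes> inv (cmt G x h) \<otimes> inv (inv h)"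
      using inv x S gc by (intro cmt_inv2) auto
    moreover have "inv (cmt G x h) \<in> N" using step1[OF inv x] subgroup.m_inv_closed[OF N] by auto
    ultimately show ?case using nc[OF Sgi[OF inv]] by auto
  next
    case (eng h1 h2)
    have "cmt G x (h1 \<otimes> h2) = cmt G x h1 \<otimes> (h1 \<otimes> cmt G x h2 \<otimes> inv h1)"
      using eng.hyps x gc by (intro cmt_mult2) auto
    then show ?case using nc[OF eng.hyps(1) eng.IH(2)] eng.IH(1) subgroup.m_closed[OF N] by auto
  qed
qed

end


abbreviation T :: "nat \<Rightarrow> real \<Rightarrow> real" where "T n \<equiv> gen_a [^]\<^bsub>PermR\<^esub> n"

lemma gens_carrier[simp]: "gen_a \<in> carrier PermR" "gen_b \<in> carrier PermR" "gen_c \<in> carrier PermR"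
  using bij_a bij_b bij_c by (auto simp: carrier_PermR)

lemma gens_G0: "gen_a \<in> G0" "gen_b \<in> G0" "gen_c \<in> G0"
  unfolding G0_def by (auto intro: generate.incl)

lemma G0_sub: "subgroup G0 PermR"
  unfolding G0_def by (rule P.generate_is_subgroup) simp

lemma G0_carrier: "x \<in> G0 \<Longrightarrow> x \<in> carrier PermR"
  using subgroup.subset[OF G0_sub] by auto

lemma T_G0: "T n \<in> G0"
proof (induction n)
  case 0 then show ?case using subgroup.one_closed[OF G0_sub] by simp
next
  case (Suc n) then show ?case using subgroup.m_closed[OF G0_sub] gens_G0 by simp
qed

lemma T_carrier[simp]: "T n \<in> carrier PermR"
  by (rule P.nat_pow_closed) simp

lemma a_app: "gen_a t = t + 1" by (simp add: gen_a_def)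

lemma app_mult[simp]: "x \<in> carrier PermR \<Longrightarrow> y \<in> carrier PermR \<Longrightarrow> (x \<otimes>\<^bsub>PermR\<^esub> y) t = x (y t)"
  by (simp add: mult_PermR)

lemma T_app[simp]: "T n t = t + real n"
proof (induction n arbitrary: t)
  case 0 then show ?case by (simp add: one_PermR)
next
  case (Suc n)
  have "T (Suc n) t = T n (gen_a t)"
    using app_mult[OF T_carrier gens_carrier(1)] by simp
  also have "\<dots> = t + real (Suc n)" using Suc.IH[of "t + 1"] a_app[of t] by simp
  finally show ?case .
qed

lemma inv_T_app[simp]: "(inv\<^bsub>PermR\<^esub> (T n)) t = t - real n"
proof -
  have "bij (T n)" using T_carrier[of n] unfolding carrier_PermR by simp
  then have "inv_into UNIV (T n) t = t - real n"
    by (intro inv_into_f_eq) (auto simp: bij_def)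
  then show ?thesis by (simp add: inv_PermR)
qed

lemma inv_a_app[simp]: "(inv\<^bsub>PermR\<^esub> gen_a) t = t - 1"
proof -
  have "inv_into UNIV gen_a t = t - 1"
    using bij_a by (intro inv_into_f_eq) (auto simp: bij_def gen_a_def)
  then show ?thesis by (simp add: inv_PermR)
qed

lemma inv_b_app[simp]: "(inv\<^bsub>PermR\<^esub> gen_b) t = binv t"
proof -
  have "inv_into UNIV gen_b t = binv t"
    using bij_b by (intro inv_into_f_eq) (auto simp: bij_def b_binv)
  then show ?thesis by (simp add: inv_PermR)
qed

lemma b_le0: "t \<le> 0 \<Longrightarrow> gen_b t = t" by (simp add: gen_b_def)
lemma b_ge1: "1 \<le> t \<Longrightarrow> gen_b t = t + 1" by (auto simp: gen_b_def field_simps)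
lemma binv_le0: "t \<le> 0 \<Longrightarrow> binv t = t" by (simp add: binv_def)
lemma binv_ge2: "2 \<le> t \<Longrightarrow> binv t = t - 1"
  by (auto simp: binv_def)
lemma c_out: "t \<notin> {0<..<1} \<Longrightarrow> gen_c t = t" by (auto simp: gen_c_def)

lemmas bfacts = b_le0 b_ge1 binv_le0 binv_ge2

definition fixo :: "(real \<Rightarrow> real) \<Rightarrow> real set \<Rightarrow> bool" where
  "fixo g A \<longleftrightarrow> (\<forall>t. t \<notin> A \<longrightarrow> g t = t)"

lemma fixo_comm:
  assumes g: "g \<in> carrier PermR" and h: "h \<in> carrier PermR" and fg: "fixo g A" and fh: "fixo h B"
    and d: "A \<inter> B = {}"
  shows "g \<otimes>\<^bsub>PermR\<^esub> h = h \<otimes>\<^bsub>PermR\<^esub> g"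
proof -
  have ig: "inj g" and ih: "inj h" using g h by (auto simp: carrier_PermR bij_def)
  have gA: "g t \<in> A" if "t \<in> A" for t
  proof (rule ccontr)
    assume "g t \<notin> A" then have "g (g t) = g t" using fg by (auto simp: fixo_def)
    then have "g t = t" using ig by (auto dest: injD)
    then show False using that \<open>g t \<notin> A\<close> by simp
  qed
  have hB: "h t \<in> B" if "t \<in> B" for t
  proof (rule ccontr)
    assume "h t \<notin> B" then have "h (h t) = h t" using fh by (auto simp: fixo_def)
    then have "h t = t" using ih by (auto dest: injD)
    then show False using that \<open>h t \<notin> B\<close> by simp
  qed
  have "g (h t) = h (g t)" for t
  proof (cases "t \<in> A")
    case True
    then have "t \<notin> B" "g t \<notin> B" using d gA by auto
    then show ?thesis using fh by (simp add: fixo_def)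
  next
    case False
    then have gt: "g t = t" using fg by (simp add: fixo_def)
    show ?thesis
    proof (cases "t \<in> B")
      case True
      then have "h t \<notin> A" using d hB by auto
      then show ?thesis using fg gt by (simp add: fixo_def)
    next
      case False
      then show ?thesis using gt fh by (simp add: fixo_def)
    qed
  qed
  then show ?thesis using g h by (auto simp: mult_PermR)
qed

lemma fixo_mono: "fixo g A \<Longrightarrow> A \<subseteq> B \<Longrightarrow> fixo g B"
  by (auto simp: fixo_def)

lemma fixo_mult: "g \<in> carrier PermR \<Longrightarrow> h \<in> carrier PermR \<Longrightarrow> fixo g A \<Longrightarrow> fixo h A \<Longrightarrow> fixo (g \<otimes>\<^bsub>PermR\<^esub> h) A"
  by (auto simp: fixo_def)

lemma fixo_inv: assumes "g \<in> carrier PermR" "fixo g A" shows "fixo (inv\<^bsub>PermR\<^esub> g) A"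
proof -
  have "bij g" using assms by (simp add: carrier_PermR)
  then have "inv_into UNIV g t = t" if "t \<notin> A" for t
    using assms(2) that by (intro inv_into_f_eq) (auto simp: bij_def fixo_def)
  then show ?thesis using assms by (simp add: inv_PermR fixo_def)
qed

lemma fixo_conj: assumes "g \<in> carrier PermR" "fixo g {p<..<q}"
  shows "fixo (T n \<otimes>\<^bsub>PermR\<^esub> g \<otimes>\<^bsub>PermR\<^esub> inv\<^bsub>PermR\<^esub> (T n)) {p + real n<..<q + real n}"
proof -
  have "g (t - real n) = t - real n" if "t \<notin> {p + real n<..<q + real n}" for t
    using assms(2) that unfolding fixo_def by auto
  then show ?thesis using assms by (simp add: fixo_def)
qed


abbreviation NN where "NN \<equiv> derived PermR (derived PermR G0)"

lemma G0_sub_carrier: "G0 \<subseteq> carrier PermR" using G0_carrier by auto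

lemma derived_G0_sub: "derived PermR G0 \<subseteq> carrier PermR"
  by (rule P.derived_in_carrier[OF G0_sub_carrier])

lemma cmt_in_derived: "g \<in> H \<Longrightarrow> h \<in> H \<Longrightarrow> cmt PermR g h \<in> derived PermR H"
  unfolding derived_def cmt_def by (rule generate.incl) blast

lemma key:
  assumes g: "g \<in> G0" and h: "h \<in> G0" and fg: "fixo g {p<..<q}" and fh: "fixo h {p<..<q}"
  shows "cmt PermR g h \<in> NN"
proof -
  define d where "d = nat \<lceil>q - p\<rceil> + 1"
  have dq: "q - p < real d" unfolding d_def by linarith
  define f where "f = T d"
  define k where "k = T (2 * d)"
  have gc: "g \<in> carrier PermR" and hc: "h \<in> carrier PermR" using g h G0_carrier by auto
  have fc: "f \<in> carrier PermR" and kc: "k \<in> carrier PermR" unfolding f_def k_def by simp_all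
  have fg2: "fixo (f \<otimes>\<^bsub>PermR\<^esub> g \<otimes>\<^bsub>PermR\<^esub> inv\<^bsub>PermR\<^esub> f) {p + real d<..<q + real d}"
    unfolding f_def by (rule fixo_conj[OF gc fg])
  have c1: "(f \<otimes>\<^bsub>PermR\<^esub> g \<otimes>\<^bsub>PermR\<^esub> inv\<^bsub>PermR\<^esub> f) \<otimes>\<^bsub>PermR\<^esub> h = h \<otimes>\<^bsub>PermR\<^esub> (f \<otimes>\<^bsub>PermR\<^esub> g \<otimes>\<^bsub>PermR\<^esub> inv\<^bsub>PermR\<^esub> f)"
    by (rule fixo_comm[OF _ hc fg2 fh]) (use gc fc dq in auto)
  have e: "cmt PermR g f = g \<otimes>\<^bsub>PermR\<^esub> (f \<otimes>\<^bsub>PermR\<^esub> inv\<^bsub>PermR\<^esub> g \<otimes>\<^bsub>PermR\<^esub> inv\<^bsub>PermR\<^esub> f)"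
    using gc fc by (simp add: cmt_def P.gs)
  have fgi: "fixo (f \<otimes>\<^bsub>PermR\<^esub> inv\<^bsub>PermR\<^esub> g \<otimes>\<^bsub>PermR\<^esub> inv\<^bsub>PermR\<^esub> f) {p + real d<..<q + real d}"
    unfolding f_def by (rule fixo_conj[OF _ fixo_inv[OF gc fg]]) (use gc in simp)
  have fcm: "fixo (cmt PermR g f) ({p<..<q} \<union> {p + real d<..<q + real d})"
    unfolding e by (rule fixo_mult) (use gc fc fixo_mono[OF fg] fixo_mono[OF fgi] in auto)
  have fh2: "fixo (k \<otimes>\<^bsub>PermR\<^esub> h \<otimes>\<^bsub>PermR\<^esub> inv\<^bsub>PermR\<^esub> k) {p + real (2*d)<..<q + real (2*d)}"
    unfolding k_def by (rule fixo_conj[OF hc fh])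
  have c2: "(k \<otimes>\<^bsub>PermR\<^esub> h \<otimes>\<^bsub>PermR\<^esub> inv\<^bsub>PermR\<^esub> k) \<otimes>\<^bsub>PermR\<^esub> cmt PermR g f = cmt PermR g f \<otimes>\<^bsub>PermR\<^esub> (k \<otimes>\<^bsub>PermR\<^esub> h \<otimes>\<^bsub>PermR\<^esub> inv\<^bsub>PermR\<^esub> k)"
    by (rule fixo_comm[OF _ _ fh2 fcm]) (use hc kc gc fc dq P.cmt_closed in auto)
  have eq: "cmt PermR g h = cmt PermR (cmt PermR g f) (cmt PermR h k)"
    by (rule P.L4[OF gc hc fc kc c1 c2])
  have fG: "f \<in> G0" "k \<in> G0" unfolding f_def k_def by (simp_all add: T_G0)
  show ?thesis unfolding eq
    by (intro cmt_in_derived) (use g h fG in auto)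
qed


abbreviation gm (infixl "\<odot>" 70) where "x \<odot> y \<equiv> x \<otimes>\<^bsub>PermR\<^esub> y"
abbreviation ii where "ii x \<equiv> inv\<^bsub>PermR\<^esub> x"

lemma G0_m: "x \<in> G0 \<Longrightarrow> y \<in> G0 \<Longrightarrow> x \<odot> y \<in> G0" by (rule subgroup.m_closed[OF G0_sub])
lemma G0_i: "x \<in> G0 \<Longrightarrow> ii x \<in> G0" by (rule subgroup.m_inv_closed[OF G0_sub])

lemma comm_bc: "cmt PermR gen_b gen_c \<in> NN"
proof -
  define u where "u = gen_a \<odot> ii gen_b \<odot> ii gen_a"
  have uc: "u \<in> carrier PermR" unfolding u_def by simp
  have uv: "u t = binv (t - 1) + 1" for t unfolding u_def by (simp add: a_app)
  have fu: "fixo u {1<..}" unfolding fixo_def uv by (auto simp: binv_le0)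
  have fc: "fixo gen_c {0<..<1}" unfolding fixo_def using c_out by auto
  have cu: "u \<odot> gen_c = gen_c \<odot> u" by (rule fixo_comm[OF uc _ fu fc]) auto
  have e: "cmt PermR gen_b gen_c = cmt PermR (gen_b \<odot> u) gen_c"
    by (rule P.L1[symmetric]) (use uc cu in auto)
  have f1: "fixo (gen_b \<odot> u) {-2<..<4}"
    unfolding fixo_def using uc by (auto simp: uv bfacts)
  show ?thesis unfolding e
    by (rule key[OF _ _ f1 fixo_mono[OF fc]]) (auto simp: u_def gens_G0 G0_m G0_i)
qed


lemma comm_ac: "cmt PermR gen_a gen_c \<in> NN"
proof -
  define Z where "Z = T 2 \<odot> ii gen_b \<odot> ii (T 4) \<odot> gen_b \<odot> T 2"
  define u where "u = ii gen_a \<odot> Z"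
  have Zc: "Z \<in> carrier PermR" unfolding Z_def by simp
  have uc: "u \<in> carrier PermR" unfolding u_def using Zc by simp
  have Zv: "Z t = binv (gen_b (t + 2) - 4) + 2" for t unfolding Z_def by simp
  have uv: "u t = Z t - 1" for t unfolding u_def using Zc by simp
  have fu: "fixo u (- {0..1})" unfolding fixo_def uv Zv by (auto simp: bfacts)
  have fc: "fixo gen_c {0<..<1}" unfolding fixo_def using c_out by auto
  have cu: "u \<odot> gen_c = gen_c \<odot> u" by (rule fixo_comm[OF uc _ fu fc]) auto
  have e: "cmt PermR gen_a gen_c = cmt PermR (gen_a \<odot> u) gen_c"
    by (rule P.L1[symmetric]) (use uc cu in auto)
  have au: "gen_a \<odot> u = Z" unfolding u_def using Zc by (simp add: P.cancel_l)
  have f1: "fixo Z {-2<..<4}"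
    unfolding fixo_def Zv by (auto simp: bfacts)
  show ?thesis unfolding e au
    by (rule key[OF _ _ f1 fixo_mono[OF fc]]) (auto simp: Z_def gens_G0 G0_m G0_i T_G0)
qed

lemma comm_ab: "cmt PermR gen_a gen_b \<in> NN"
proof -
  define vL where "vL = ii gen_a \<odot> ii (T 2) \<odot> gen_b \<odot> T 2"
  have vc: "vL \<in> carrier PermR" unfolding vL_def by simp
  have vv: "vL t = gen_b (t + 2) - 3" for t unfolding vL_def by simp
  have fv: "fixo vL {..<-1}" unfolding fixo_def vv by (auto simp: bfacts)
  have fb: "fixo gen_b {0<..}" unfolding fixo_def by (auto simp: bfacts)
  have cv: "vL \<odot> gen_b = gen_b \<odot> vL" by (rule fixo_comm[OF vc _ fv fb]) auto
  define Xe where "Xe = gen_a \<odot> vL \<odot> ii gen_b"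
  have Xec: "Xe \<in> carrier PermR" unfolding Xe_def using vc by simp
  have e1: "cmt PermR gen_a gen_b = cmt PermR Xe gen_b"
    unfolding Xe_def using vc cv by (simp add: P.L1 P.L2)
  have Xev: "Xe t = gen_b (binv t + 2) - 2" for t unfolding Xe_def using vc by (simp add: vv a_app)
  have fXe: "fixo Xe {-2<..<4}" unfolding fixo_def Xev by (auto simp: bfacts)
  define w where "w = T 2 \<odot> ii gen_b \<odot> ii (T 2)"
  have wc: "w \<in> carrier PermR" unfolding w_def by simp
  have wv: "w t = binv (t - 2) + 2" for t unfolding w_def by simp
  have fw: "fixo w {2<..}" unfolding fixo_def wv by (auto simp: bfacts)
  have fXe2: "fixo Xe {-2<..<2}" unfolding fixo_def Xev by (auto simp: bfacts)
  have cw: "w \<odot> Xe = Xe \<odot> w" by (rule fixo_comm[OF wc Xec fw fXe2]) auto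
  have e2: "cmt PermR Xe gen_b = cmt PermR Xe (gen_b \<odot> w)"
    by (rule P.L3[symmetric]) (use Xec wc cw in auto)
  have fY: "fixo (gen_b \<odot> w) {-2<..<4}" unfolding fixo_def using wc by (auto simp: wv bfacts)
  show ?thesis unfolding e1 e2
    by (rule key[OF _ _ fXe fY]) (auto simp: Xe_def vL_def w_def gens_G0 G0_m G0_i T_G0)
qed


lemma NN_sub: "subgroup NN PermR" by (rule P.derived_is_subgroup[OF derived_G0_sub])

lemma cmt_self: "x \<in> carrier PermR \<Longrightarrow> cmt PermR x x = \<one>\<^bsub>PermR\<^esub>"
  by (simp add: cmt_def P.gs)

lemma gens_cmt: assumes "s \<in> {gen_a, gen_b, gen_c}" "t \<in> {gen_a, gen_b, gen_c}"
  shows "cmt PermR s t \<in> NN"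
proof -
  have sw: "cmt PermR y x \<in> NN" if "cmt PermR x y \<in> NN" "x \<in> carrier PermR" "y \<in> carrier PermR" for x y
    using P.cmt_swap[OF that(2,3)] subgroup.m_inv_closed[OF NN_sub that(1)] by simp
  have one: "\<one>\<^bsub>PermR\<^esub> \<in> NN" by (rule subgroup.one_closed[OF NN_sub])
  show ?thesis using assms comm_ab comm_ac comm_bc
    by (auto simp: cmt_self one intro: sw)
qed

theorem mainTheorem5:
  shows "derived PermR G0 = derived PermR (derived PermR G0)"
proof
  have d: "derived PermR G0 = generate PermR (derived_set PermR G0)" by (rule derived_def)
  have "generate PermR (derived_set PermR G0) \<subseteq> NN"
  proof (rule P.generate_subgroup_incl[OF _ NN_sub])
    show "derived_set PermR G0 \<subseteq> NN"
    proof
      fix z assume "z \<in> derived_set PermR G0"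
      then obtain x y where xy: "x \<in> G0" "y \<in> G0" "z = cmt PermR x y" by (auto simp: cmt_def)
      have nc: "x \<odot> n \<odot> ii x \<in> NN" if x: "x \<in> G0" and n: "n \<in> NN" for x n
      proof -
        have xc: "x \<in> carrier PermR" using x G0_carrier by auto
        have cl1: "x \<odot> h \<odot> ii x \<in> G0" if "h \<in> G0" for h
          using that x by (simp add: G0_m G0_i)
        have cl2: "x \<odot> h \<odot> ii x \<in> derived PermR G0" if "h \<in> derived PermR G0" for h
          by (rule P.conj_derived[OF G0_sub_carrier xc cl1 that])
        show ?thesis by (rule P.conj_derived[OF derived_G0_sub xc cl2 n])
      qed
      have "cmt PermR x y \<in> NN"
        by (rule P.gen_cmt[of "{gen_a, gen_b, gen_c}"])
           (use xy nc gens_cmt NN_sub in \<open>auto simp: G0_def\<close>)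
      then show "z \<in> NN" using xy by simp
    qed
  qed
  then show "derived PermR G0 \<subseteq> NN" by (metis d)
  show "NN \<subseteq> derived PermR G0"
    by (rule P.derived_incl[OF subset_refl P.derived_is_subgroup[OF G0_sub_carrier]])
qed

end
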